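(* Let $A_1$ and $B_1$ be arrays with $n$ columns, and suppose that $A_1$ and $B_1$ are $\phi$-equivalent with respect to the completely filled $m\times n$ array $J_{m,n}$, where $\phi$ is the bishop's move function. Then $A_1$ and $B_1$ are $\phi$-equivalent with respect to every $m\times n$ array.
   Context: Arrays are partially filled and toroidal, every row and column containing a filled cell; $F(X)$ is the set of filled cells. $s_R(i,j)=(i,j+t)$, $s_C(i,j)=(i+t,j)$ with $t\ge1$ minimal such that the cell is filled; the bishop's move is $s_C\circ s_R$. For arrays $Y$ and $X$ with the same number of columns, $[Y\mid X]^T$ denotes the array obtained by placing $Y$ above $X$; cells of $X$ are identified with their copies in it. Given a move function $\phi$ on $[A_1\mid X]^T$ and $\sigma$ on $[B_1\mid X]^T$, let $\phi_2:F(X)\to F(X)$, $\phi_2(x)=\phi^t(x)$ with $t\ge1$ minimal such that $\phi^t(x)\in X$, and similarly $\sigma_2$. $A_1$ and $B_1$ are $(\phi,\sigma)$-equivalent with respect to $X$ if for every $x\in F(X)$: $\phi(x)\notin X\iff\sigma(x)\notin X$, and if $\phi(x),\sigma(x)\notin X$ then $\phi_2(x)=\sigma_2(x)$. When $\phi$ and $\sigma$ are both the bishop's move this is called $\phi$-equivalence. *)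

theory Defs
  imports Main
begin

type_synonym cell = "nat \<times> nat"

text \<open>A toroidal partially filled array with r rows and c columns, given by its
set of filled cells F (0-indexed); every row and every column contains a filled cell.\<close>
definition is_array :: "nat \<Rightarrow> nat \<Rightarrow> cell set \<Rightarrow> bool" where
  "is_array r c F \<longleftrightarrow> F \<subseteq> {..<r} \<times> {..<c}
     \<and> (\<forall>i<r. \<exists>j. (i, j) \<in> F) \<and> (\<forall>j<c. \<exists>i. (i, j) \<in> F)"

definition J :: "nat \<Rightarrow> nat \<Rightarrow> cell set" where
  "J m n = {..<m} \<times> {..<n}"

definition s_R :: "nat \<Rightarrow> cell set \<Rightarrow> cell \<Rightarrow> cell" where
  "s_R c F x = (let t = (LEAST t. t \<ge> 1 \<and> (fst x, (snd x + t) mod c) \<in> F)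
                in (fst x, (snd x + t) mod c))"

definition s_C :: "nat \<Rightarrow> cell set \<Rightarrow> cell \<Rightarrow> cell" where
  "s_C r F x = (let t = (LEAST t. t \<ge> 1 \<and> ((fst x + t) mod r, snd x) \<in> F)
                in ((fst x + t) mod r, snd x))"

definition bishop :: "nat \<Rightarrow> nat \<Rightarrow> cell set \<Rightarrow> cell \<Rightarrow> cell" where
  "bishop r c F = s_C r F \<circ> s_R c F"

text \<open>[Y | X]^T where Y has a rows: Y occupies rows 0..a-1, X is shifted down by a.\<close>
definition stack :: "nat \<Rightarrow> cell set \<Rightarrow> cell set \<Rightarrow> cell set" where
  "stack a Y X = Y \<union> (\<lambda>(i, j). (i + a, j)) ` X"

definition return_X :: "(cell \<Rightarrow> cell) \<Rightarrow> nat \<Rightarrow> cell \<Rightarrow> cell" where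
  "return_X f a x = (f ^^ (LEAST t. t \<ge> 1 \<and> fst ((f ^^ t) x) \<ge> a)) x"

text \<open>(phi,sigma)-equivalence of A_1 (a rows) and B_1 (b rows) w.r.t. X, where phi is a
move function on [A_1|X]^T and sigma on [B_1|X]^T. A cell (i,j) of X is the cell
(i+a,j) of the first stack and (i+b,j) of the second.\<close>
definition move_equiv ::
  "(cell \<Rightarrow> cell) \<Rightarrow> nat \<Rightarrow> (cell \<Rightarrow> cell) \<Rightarrow> nat \<Rightarrow> cell set \<Rightarrow> bool" where
  "move_equiv \<phi> a \<sigma> b X \<longleftrightarrow> (\<forall>i j. (i, j) \<in> X \<longrightarrow>
      ((fst (\<phi> (i + a, j)) < a \<longleftrightarrow> fst (\<sigma> (i + b, j)) < b)
      \<and> (fst (\<phi> (i + a, j)) < a \<and> fst (\<sigma> (i + b, j)) < b \<longrightarrow>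
          (fst (return_X \<phi> a (i + a, j)) - a, snd (return_X \<phi> a (i + a, j)))
        = (fst (return_X \<sigma> b (i + b, j)) - b, snd (return_X \<sigma> b (i + b, j))))))"

definition bishop_equiv ::
  "nat \<Rightarrow> cell set \<Rightarrow> nat \<Rightarrow> cell set \<Rightarrow> nat \<Rightarrow> nat \<Rightarrow> cell set \<Rightarrow> bool" where
  "bishop_equiv a A b B m n X \<longleftrightarrow>
     move_equiv (bishop (a + m) n (stack a A X)) a (bishop (b + m) n (stack b B X)) b X"

end

theory Submission
  imports Defs
begin



lemma cyc_inj_lt:
  fixes n x y tx ty :: nat
  assumes "x < y" "y < n" "1 \<le> tx" "tx \<le> n" "1 \<le> ty" "ty \<le> n"
    and "P x" "P y"
    and "\<forall>s. 1 \<le> s \<longrightarrow> s < tx \<longrightarrow> \<not> P ((x + s) mod n)"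
    and "\<forall>s. 1 \<le> s \<longrightarrow> s < ty \<longrightarrow> \<not> P ((y + s) mod n)"
    and "(x + tx) mod n = (y + ty) mod n"
  shows False
proof -
  have "(x + (y - x)) mod n = y" using assms by simp
  hence tx: "tx \<le> y - x"
  proof -
    assume h: "(x + (y - x)) mod n = y"
    show ?thesis
    proof (rule ccontr)
      assume "\<not> tx \<le> y - x"
      hence "1 \<le> y - x" "y - x < tx" using assms(1) by auto
      then show False using assms(9) assms(8) h by metis
    qed
  qed
  have "y + (n - (y - x)) = x + n" using assms by linarith
  hence "(y + (n - (y - x))) mod n = x" using assms by simp
  moreover have "1 \<le> n - (y - x)" using assms by linarith
  ultimately have ty: "ty \<le> n - (y - x)" using assms(7) assms(10) not_le by metis
  have "(x + tx) mod n = x + tx" using tx assms by simp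
  show False
  proof (cases "y + ty < n")
    case True
    then show ?thesis using assms tx by simp
  next
    case False
    hence "(y + ty) mod n = y + ty - n" using assms by (simp add: mod_if)
    then show ?thesis using assms tx ty \<open>(x + tx) mod n = x + tx\<close> by linarith
  qed
qed

lemma cyc_inj:
  fixes n x y tx ty :: nat
  assumes "x < n" "y < n" "1 \<le> tx" "tx \<le> n" "1 \<le> ty" "ty \<le> n"
    and "P x" "P y"
    and "\<forall>s. 1 \<le> s \<longrightarrow> s < tx \<longrightarrow> \<not> P ((x + s) mod n)"
    and "\<forall>s. 1 \<le> s \<longrightarrow> s < ty \<longrightarrow> \<not> P ((y + s) mod n)"
    and "(x + tx) mod n = (y + ty) mod n"
  shows "x = y"
proof (rule ccontr)
  assume "x \<noteq> y"
  then consider "x < y" | "y < x" by linarith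
  then show False
  proof cases
    case 1 then show ?thesis using cyc_inj_lt[of x y n tx ty P] assms by blast
  next
    case 2 then show ?thesis using cyc_inj_lt[of y x n ty tx P] assms by metis
  qed
qed

lemma least_cyc:
  fixes n x :: nat
  assumes "x < n" "P x"
  defines "t \<equiv> LEAST t. t \<ge> 1 \<and> P ((x + t) mod n)"
  shows "1 \<le> t \<and> t \<le> n \<and> P ((x + t) mod n) \<and> (\<forall>s. 1 \<le> s \<longrightarrow> s < t \<longrightarrow> \<not> P ((x + s) mod n))"
proof -
  have ex: "n \<ge> 1 \<and> P ((x + n) mod n)" using assms by simp
  have "1 \<le> t \<and> P ((x + t) mod n)" unfolding t_def by (rule LeastI[of _ n]) (use ex in auto)
  moreover have "t \<le> n" unfolding t_def by (rule Least_le) (use ex in auto)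
  moreover have "\<forall>s. 1 \<le> s \<longrightarrow> s < t \<longrightarrow> \<not> P ((x + s) mod n)"
    unfolding t_def using not_less_Least by blast
  ultimately show ?thesis by blast
qed

lemma arr_sub: "is_array r c F \<Longrightarrow> (i, j) \<in> F \<Longrightarrow> i < r \<and> j < c"
  unfolding is_array_def by blast

lemma sR_props:
  assumes "is_array r c F" "(i, j) \<in> F"
  defines "t \<equiv> LEAST t. t \<ge> 1 \<and> (i, (j + t) mod c) \<in> F"
  shows "s_R c F (i, j) = (i, (j + t) mod c) \<and> 1 \<le> t \<and> t \<le> c \<and> (i, (j + t) mod c) \<in> F
     \<and> (\<forall>s. 1 \<le> s \<longrightarrow> s < t \<longrightarrow> (i, (j + s) mod c) \<notin> F)"
  using least_cyc[of j c "\<lambda>k. (i, k) \<in> F"] arr_sub[OF assms(1,2)] assms(2)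
  unfolding s_R_def t_def Let_def by auto

lemma sC_props:
  assumes "is_array r c F" "(i, j) \<in> F"
  defines "t \<equiv> LEAST t. t \<ge> 1 \<and> ((i + t) mod r, j) \<in> F"
  shows "s_C r F (i, j) = ((i + t) mod r, j) \<and> 1 \<le> t \<and> t \<le> r \<and> ((i + t) mod r, j) \<in> F
     \<and> (\<forall>s. 1 \<le> s \<longrightarrow> s < t \<longrightarrow> ((i + s) mod r, j) \<notin> F)"
  using least_cyc[of i r "\<lambda>k. (k, j) \<in> F"] arr_sub[OF assms(1,2)] assms(2)
  unfolding s_C_def t_def Let_def by auto

lemma sR_in: assumes "is_array r c F" "x \<in> F" shows "s_R c F x \<in> F"
proof -
  obtain i j where x: "x = (i, j)" by fastforce
  show ?thesis using sR_props[OF assms(1) assms(2)[unfolded x]] unfolding x by simp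
qed

lemma sC_in: assumes "is_array r c F" "x \<in> F" shows "s_C r F x \<in> F"
proof -
  obtain i j where x: "x = (i, j)" by fastforce
  show ?thesis using sC_props[OF assms(1) assms(2)[unfolded x]] unfolding x by simp
qed

lemma sR_inj: assumes "is_array r c F" shows "inj_on (s_R c F) F"
proof (rule inj_onI)
  fix x y assume x: "x \<in> F" and y: "y \<in> F" and e: "s_R c F x = s_R c F y"
  obtain i j where xij: "x = (i, j)" by fastforce
  obtain i' j' where yij: "y = (i', j')" by fastforce
  note px = sR_props[OF assms x[unfolded xij]]
  note py = sR_props[OF assms y[unfolded yij]]
  have ii: "i = i'" using e px py xij yij by auto
  have "j = j'"
    apply (rule cyc_inj[where P = "\<lambda>k. (i, k) \<in> F" and n = c])
    using px py ii e xij yij x y arr_sub[OF assms] by auto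
  then show "x = y" using ii xij yij by simp
qed

lemma sC_inj: assumes "is_array r c F" shows "inj_on (s_C r F) F"
proof (rule inj_onI)
  fix x y assume x: "x \<in> F" and y: "y \<in> F" and e: "s_C r F x = s_C r F y"
  obtain i j where xij: "x = (i, j)" by fastforce
  obtain i' j' where yij: "y = (i', j')" by fastforce
  note px = sC_props[OF assms x[unfolded xij]]
  note py = sC_props[OF assms y[unfolded yij]]
  have jj: "j = j'" using e px py xij yij by auto
  have "i = i'"
    apply (rule cyc_inj[where P = "\<lambda>k. (k, j) \<in> F" and n = r])
    using px py jj e xij yij x y arr_sub[OF assms] by auto
  then show "x = y" using jj xij yij by simp
qed

lemma orbit_return:
  assumes "finite F" "inj_on f F" "f ` F \<subseteq> F" "x \<in> F"
  shows "\<exists>k\<ge>1. (f ^^ k) x = x"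
proof -
  have mem: "(f ^^ k) x \<in> F" for k by (induction k) (use assms in auto)
  have "\<not> inj_on (\<lambda>k. (f ^^ k) x) {..card F}"
  proof
    assume "inj_on (\<lambda>k. (f ^^ k) x) {..card F}"
    from card_inj_on_le[OF this _ assms(1)] mem have "card {..card F} \<le> card F" by blast
    then show False by simp
  qed
  then obtain i j where ij: "i < j" "(f ^^ i) x = (f ^^ j) x"
    unfolding inj_on_def by (metis linorder_neqE_nat)
  define d where "d = j - i"
  have d1: "d \<ge> 1" using ij d_def by simp
  have "(f ^^ i) ((f ^^ d) x) = (f ^^ i) x" using ij d_def
    by (metis funpow_add le_add_diff_inverse2 less_imp_le_nat o_apply add.commute)
  moreover have "\<And>i. (f ^^ i) ((f ^^ d) x) = (f ^^ i) x \<Longrightarrow> (f ^^ d) x = x"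
  proof -
    fix i show "(f ^^ i) ((f ^^ d) x) = (f ^^ i) x \<Longrightarrow> (f ^^ d) x = x"
    proof (induction i)
      case 0 then show ?case by simp
    next
      case (Suc i)
      have "f ((f ^^ i) ((f ^^ d) x)) = f ((f ^^ i) x)" using Suc.prems by simp
      moreover have "(f ^^ i) ((f ^^ d) x) \<in> F" using mem by (metis funpow_add o_apply)
      ultimately have "(f ^^ i) ((f ^^ d) x) = (f ^^ i) x"
        using assms(2) mem unfolding inj_on_def by blast
      then show ?case by (rule Suc.IH)
    qed
  qed
  ultimately show ?thesis using d1 by blast
qed

lemma bishop_return:
  assumes "is_array r c F" "x \<in> F"
  shows "\<exists>k\<ge>1. (bishop r c F ^^ k) x = x"
proof (rule orbit_return[OF _ _ _ assms(2)])
  show "finite F" using assms(1) unfolding is_array_def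
    by (meson finite_SigmaI finite_lessThan finite_subset)
  show "inj_on (bishop r c F) F" unfolding bishop_def
    by (rule comp_inj_on) (use sR_inj[OF assms(1)] sC_inj[OF assms(1)] sR_in[OF assms(1)] in \<open>auto intro: inj_on_subset\<close>)
  show "bishop r c F ` F \<subseteq> F" unfolding bishop_def
    by (rule image_subsetI) (simp add: sC_in[OF assms(1)] sR_in[OF assms(1)])
qed



lemma mem_stack:
  assumes "A \<subseteq> {..<a} \<times> UNIV"
  shows "(p, c) \<in> stack a A X \<longleftrightarrow> (p < a \<and> (p, c) \<in> A) \<or> (a \<le> p \<and> (p - a, c) \<in> X)"
proof
  assume "(p, c) \<in> stack a A X"
  then consider "(p, c) \<in> A" | q where "(q, c) \<in> X" "p = q + a" unfolding stack_def by auto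
  then show "(p < a \<and> (p, c) \<in> A) \<or> (a \<le> p \<and> (p - a, c) \<in> X)"
    by cases (use assms in auto)
next
  assume "(p < a \<and> (p, c) \<in> A) \<or> (a \<le> p \<and> (p - a, c) \<in> X)"
  then show "(p, c) \<in> stack a A X"
  proof
    assume "a \<le> p \<and> (p - a, c) \<in> X"
    then have "(p, c) = (\<lambda>(i, j). (i + a, j)) (p - a, c)" by simp
    with \<open>a \<le> p \<and> (p - a, c) \<in> X\<close> show ?thesis unfolding stack_def by blast
  qed (simp add: stack_def)
qed
lemma sC_char:
  assumes "1 \<le> t" "((i + t) mod R, j) \<in> F" "\<forall>s. 1 \<le> s \<longrightarrow> s < t \<longrightarrow> ((i + s) mod R, j) \<notin> F"
  shows "s_C R F (i, j) = ((i + t) mod R, j)"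
proof -
  have "(LEAST t. t \<ge> 1 \<and> ((i + t) mod R, j) \<in> F) = t"
    by (rule Least_equality) (use assms not_less in auto)
  then show ?thesis unfolding s_C_def Let_def by simp
qed

lemma stack_array:
  assumes "is_array a n A" "is_array m n X"
  shows "is_array (a + m) n (stack a A X)"
proof -
  have Asub: "A \<subseteq> {..<a} \<times> UNIV" using assms(1) unfolding is_array_def by blast
  have "stack a A X \<subseteq> {..<a + m} \<times> {..<n}"
  proof
    fix x assume "x \<in> stack a A X"
    then obtain p c where x: "x = (p, c)" "(p, c) \<in> stack a A X" by (cases x) auto
    then show "x \<in> {..<a + m} \<times> {..<n}" using mem_stack[OF Asub] assms unfolding is_array_def
      by auto
  qed
  moreover have "\<forall>i<a + m. \<exists>j. (i, j) \<in> stack a A X"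
  proof (intro allI impI)
    fix i assume i: "i < a + m"
    show "\<exists>j. (i, j) \<in> stack a A X"
    proof (cases "i < a")
      case True then obtain j where "(i, j) \<in> A" using assms(1) unfolding is_array_def by blast
      then show ?thesis unfolding stack_def by blast
    next
      case False
      then have "i - a < m" using i by simp
      then obtain j where "(i - a, j) \<in> X" using assms(2) unfolding is_array_def by blast
      then show ?thesis using mem_stack[OF Asub] False by auto
    qed
  qed
  moreover have "\<forall>j<n. \<exists>i. (i, j) \<in> stack a A X"
  proof (intro allI impI)
    fix j assume "j < n"
    then obtain i where "(i, j) \<in> A" using assms(1) unfolding is_array_def by blast
    then show "\<exists>i. (i, j) \<in> stack a A X" unfolding stack_def by blast
  qed
  ultimately show ?thesis unfolding is_array_def by blast
qed

lemma sC_X: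
  assumes A: "is_array a n A" and X: "is_array m n X" and i: "i < m" and c: "c < n"
  shows "s_C (a + m) (stack a A X) (i + a, c) =
    (if \<exists>k. i < k \<and> k < m \<and> (k, c) \<in> X then ((LEAST k. i < k \<and> (k, c) \<in> X) + a, c)
     else ((LEAST r. (r, c) \<in> A), c))"
proof -
  have Asub: "A \<subseteq> {..<a} \<times> UNIV" using A unfolding is_array_def by blast
  note ms = mem_stack[OF Asub]
  show ?thesis
  proof (cases "\<exists>k. i < k \<and> k < m \<and> (k, c) \<in> X")
    case True
    define k0 where "k0 = (LEAST k. i < k \<and> (k, c) \<in> X)"
    have k0: "i < k0" "(k0, c) \<in> X" using True LeastI_ex[of "\<lambda>k. i < k \<and> (k, c) \<in> X"] k0_def by auto
    have k0m: "k0 < m" using arr_sub[OF X k0(2)] by simp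
    have min: "\<And>k. i < k \<Longrightarrow> k < k0 \<Longrightarrow> (k, c) \<notin> X" using not_less_Least k0_def by blast
    have "s_C (a + m) (stack a A X) (i + a, c) = ((i + a + (k0 - i)) mod (a + m), c)"
    proof (rule sC_char)
      show "1 \<le> k0 - i" using k0 by simp
      show "((i + a + (k0 - i)) mod (a + m), c) \<in> stack a A X" using k0 k0m ms by simp
      show "\<forall>s. 1 \<le> s \<longrightarrow> s < k0 - i \<longrightarrow> ((i + a + s) mod (a + m), c) \<notin> stack a A X"
      proof (intro allI impI)
        fix s assume s: "1 \<le> s" "s < k0 - i"
        have e: "(i + a + s) mod (a + m) = i + s + a" using s k0m by simp
        show "((i + a + s) mod (a + m), c) \<notin> stack a A X"
          unfolding e ms using min[of "i + s"] s by auto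
      qed
    qed
    also have "(i + a + (k0 - i)) mod (a + m) = k0 + a" using k0 k0m by simp
    finally show ?thesis using True k0_def by simp
  next
    case False
    define r0 where "r0 = (LEAST r. (r, c) \<in> A)"
    have exA: "\<exists>r. (r, c) \<in> A" using A c unfolding is_array_def by blast
    have r0: "(r0, c) \<in> A" using LeastI_ex[OF exA] r0_def by simp
    have r0a: "r0 < a" using arr_sub[OF A r0] by simp
    have min: "\<And>r. r < r0 \<Longrightarrow> (r, c) \<notin> A" using not_less_Least r0_def by blast
    have "s_C (a + m) (stack a A X) (i + a, c) = ((i + a + (m - i + r0)) mod (a + m), c)"
    proof (rule sC_char)
      show "1 \<le> m - i + r0" using i by simp
      have e: "(i + a + (m - i + r0)) mod (a + m) = r0"
      proof -
        have "i + a + (m - i + r0) = r0 + (a + m)" using i by linarith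
        moreover have "(r0 + (a + m)) mod (a + m) = r0" using r0a by (simp only: mod_add_self2) simp
        ultimately show ?thesis by metis
      qed
      show "((i + a + (m - i + r0)) mod (a + m), c) \<in> stack a A X" using e r0 r0a ms by simp
      show "\<forall>s. 1 \<le> s \<longrightarrow> s < m - i + r0 \<longrightarrow> ((i + a + s) mod (a + m), c) \<notin> stack a A X"
      proof (intro allI impI)
        fix s assume s: "1 \<le> s" "s < m - i + r0"
        show "((i + a + s) mod (a + m), c) \<notin> stack a A X"
        proof (cases "i + s < m")
          case True
          have e: "(i + a + s) mod (a + m) = i + s + a" using True by simp
          show ?thesis unfolding e ms using False True s by auto
        next
          case F2: False
          have h: "i + a + s = (s - (m - i)) + (a + m)" using F2 i by linarith
          have "s - (m - i) < a + m" using s i r0a by linarith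
          then have e: "(i + a + s) mod (a + m) = s - (m - i)" by (simp add: h)
          show ?thesis unfolding e ms using min[of "s - (m - i)"] s F2 r0a by auto
        qed
      qed
    qed
    also have "(i + a + (m - i + r0)) mod (a + m) = r0"
    proof -
      have "i + a + (m - i + r0) = r0 + (a + m)" using i by linarith
      moreover have "(r0 + (a + m)) mod (a + m) = r0" using r0a by (simp only: mod_add_self2) simp
        ultimately show ?thesis by metis
    qed
    finally show ?thesis using False r0_def by auto
  qed
qed

lemma sC_A:
  assumes A: "is_array a n A" and X: "is_array m n X" and r: "r < a" and c: "c < n"
  shows "s_C (a + m) (stack a A X) (r, c) =
    (if \<exists>k. r < k \<and> k < a \<and> (k, c) \<in> A then ((LEAST k. r < k \<and> (k, c) \<in> A), c)
     else (a + (LEAST k. (k, c) \<in> X), c))"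
proof -
  have Asub: "A \<subseteq> {..<a} \<times> UNIV" using A unfolding is_array_def by blast
  note ms = mem_stack[OF Asub]
  show ?thesis
  proof (cases "\<exists>k. r < k \<and> k < a \<and> (k, c) \<in> A")
    case True
    define k0 where "k0 = (LEAST k. r < k \<and> (k, c) \<in> A)"
    have k0: "r < k0" "(k0, c) \<in> A" using True LeastI_ex[of "\<lambda>k. r < k \<and> (k, c) \<in> A"] k0_def by auto
    have k0a: "k0 < a" using arr_sub[OF A k0(2)] by simp
    have min: "\<And>k. r < k \<Longrightarrow> k < k0 \<Longrightarrow> (k, c) \<notin> A" using not_less_Least k0_def by blast
    have "s_C (a + m) (stack a A X) (r, c) = ((r + (k0 - r)) mod (a + m), c)"
    proof (rule sC_char)
      show "1 \<le> k0 - r" using k0 by simp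
      show "((r + (k0 - r)) mod (a + m), c) \<in> stack a A X" using k0 k0a ms by simp
      show "\<forall>s. 1 \<le> s \<longrightarrow> s < k0 - r \<longrightarrow> ((r + s) mod (a + m), c) \<notin> stack a A X"
      proof (intro allI impI)
        fix s assume s: "1 \<le> s" "s < k0 - r"
        have e: "(r + s) mod (a + m) = r + s" using s k0a by simp
        show "((r + s) mod (a + m), c) \<notin> stack a A X"
          unfolding e ms using min[of "r + s"] s k0a by auto
      qed
    qed
    also have "(r + (k0 - r)) mod (a + m) = k0" using k0 k0a by simp
    finally show ?thesis using True k0_def by simp
  next
    case False
    define k1 where "k1 = (LEAST k. (k, c) \<in> X)"
    have exX: "\<exists>k. (k, c) \<in> X" using X c unfolding is_array_def by blast
    have k1: "(k1, c) \<in> X" using LeastI_ex[OF exX] k1_def by simp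
    have k1m: "k1 < m" using arr_sub[OF X k1] by simp
    have min: "\<And>k. k < k1 \<Longrightarrow> (k, c) \<notin> X" using not_less_Least k1_def by blast
    have "s_C (a + m) (stack a A X) (r, c) = ((r + (a - r + k1)) mod (a + m), c)"
    proof (rule sC_char)
      show "1 \<le> a - r + k1" using r by simp
      have e: "(r + (a - r + k1)) mod (a + m) = a + k1" using r k1m by simp
      show "((r + (a - r + k1)) mod (a + m), c) \<in> stack a A X" using e k1 ms by simp
      show "\<forall>s. 1 \<le> s \<longrightarrow> s < a - r + k1 \<longrightarrow> ((r + s) mod (a + m), c) \<notin> stack a A X"
      proof (intro allI impI)
        fix s assume s: "1 \<le> s" "s < a - r + k1"
        have e: "(r + s) mod (a + m) = r + s" using s r k1m by simp
        show "((r + s) mod (a + m), c) \<notin> stack a A X"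
          unfolding e ms using min[of "r + s - a"] s False r by auto
      qed
    qed
    also have "(r + (a - r + k1)) mod (a + m) = a + k1" using r k1m by simp
    finally show ?thesis using False k1_def by auto
  qed
qed

lemma sR_stack_A:
  assumes "r < a"
  shows "s_R n (stack a A X) (r, c) = s_R n A (r, c)"
proof -
  have "\<And>k. (r, k) \<in> stack a A X \<longleftrightarrow> (r, k) \<in> A" using assms unfolding stack_def by auto
  then show ?thesis unfolding s_R_def by simp
qed

lemma sR_stack_X:
  assumes "A \<subseteq> {..<a} \<times> UNIV"
  shows "s_R n (stack a A X) (i + a, c) = (i + a, snd (s_R n X (i, c)))"
proof -
  have "\<And>k. (i + a, k) \<in> stack a A X \<longleftrightarrow> (i, k) \<in> X" using mem_stack[OF assms] by simp
  then show ?thesis unfolding s_R_def by (simp add: Let_def)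
qed



lemma coupling:
  fixes f h g :: "cell \<Rightarrow> cell"
  assumes fx: "f x = h x'" and lt: "fst (h x') < a"
    and fg: "\<And>y. fst y < a \<Longrightarrow> f y = g (h y)"
    and g1: "\<And>p. fst p < a \<Longrightarrow> g p = p"
    and g2: "\<And>p. a \<le> fst p \<Longrightarrow> a \<le> fst (g p)"
    and ex: "\<exists>T\<ge>1. a \<le> fst ((h ^^ T) x')"
  shows "return_X f a x = g (return_X h a x') \<and> a \<le> fst (return_X h a x')"
proof -
  define T where "T = (LEAST t. t \<ge> 1 \<and> fst ((h ^^ t) x') \<ge> a)"
  have T: "T \<ge> 1" "a \<le> fst ((h ^^ T) x')" using LeastI_ex[OF ex] T_def by auto
  have Tmin: "\<And>s. 1 \<le> s \<Longrightarrow> s < T \<Longrightarrow> fst ((h ^^ s) x') < a"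
    using not_less_Least T_def by (metis not_le)
  have T2: "T \<noteq> 1" using T lt by auto
  have eq: "\<And>t. 1 \<le> t \<Longrightarrow> t < T \<Longrightarrow> (f ^^ t) x = (h ^^ t) x'"
  proof -
    fix t show "1 \<le> t \<Longrightarrow> t < T \<Longrightarrow> (f ^^ t) x = (h ^^ t) x'"
    proof (induction t)
      case 0 then show ?case by simp
    next
      case (Suc t)
      show ?case
      proof (cases "t = 0")
        case True then show ?thesis using fx by simp
      next
        case False
        then have IH: "(f ^^ t) x = (h ^^ t) x'" using Suc by simp
        have "fst ((h ^^ t) x') < a" using Tmin[of t] False Suc.prems by simp
        moreover have "fst ((h ^^ Suc t) x') < a" using Tmin[of "Suc t"] Suc.prems by simp
        ultimately show ?thesis using IH fg g1 by simp
      qed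
    qed
  qed
  obtain t where t: "T = Suc t" "1 \<le> t" using T T2 by (metis Suc_diff_1 less_one not_less linorder_neqE_nat le_less One_nat_def Suc_le_eq)
  have fT: "(f ^^ T) x = g ((h ^^ T) x')"
    using eq[of t] t Tmin[of t] fg by simp
  have "(LEAST t. t \<ge> 1 \<and> fst ((f ^^ t) x) \<ge> a) = T"
  proof (rule Least_equality)
    show "1 \<le> T \<and> a \<le> fst ((f ^^ T) x)" using T fT g2 by simp
    fix y assume y: "1 \<le> y \<and> a \<le> fst ((f ^^ y) x)"
    show "T \<le> y"
    proof (rule ccontr)
      assume "\<not> T \<le> y"
      then show False using eq[of y] Tmin[of y] y by simp
    qed
  qed
  then show ?thesis unfolding return_X_def using fT T T_def by simp
qed

lemma J_array: "1 \<le> m \<Longrightarrow> 1 \<le> n \<Longrightarrow> is_array m n (J m n)"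
  unfolding is_array_def J_def by (auto intro: exI[where x=0])

lemma sR_X_col:
  assumes X: "is_array m n X" and ij: "(i, j) \<in> X"
  shows "s_R n X (i, j) = (i, snd (s_R n X (i, j))) \<and> snd (s_R n X (i, j)) < n"
  using sR_props[OF X ij] sR_in[OF X ij] arr_sub[OF X] by (metis prod.collapse fst_conv)

lemma bishop_X_cell:
  assumes A: "is_array a n A" and X: "is_array m n X" and ij: "(i, j) \<in> X"
  defines "c' \<equiv> snd (s_R n X (i, j))"
  shows "bishop (a + m) n (stack a A X) (i + a, j) =
    (if \<exists>k. i < k \<and> k < m \<and> (k, c') \<in> X then ((LEAST k. i < k \<and> (k, c') \<in> X) + a, c')
     else ((LEAST r. (r, c') \<in> A), c'))"
proof -
  have Asub: "A \<subseteq> {..<a} \<times> UNIV" using A unfolding is_array_def by blast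
  have "s_R n (stack a A X) (i + a, j) = (i + a, c')" using sR_stack_X[OF Asub] c'_def by simp
  moreover have "c' < n" using sR_X_col[OF X ij] c'_def by simp
  moreover have "i < m" using arr_sub[OF X ij] by simp
  ultimately show ?thesis unfolding bishop_def using sC_X[OF A X] by simp
qed

lemma bishop_X_lt:
  assumes A: "is_array a n A" and X: "is_array m n X" and ij: "(i, j) \<in> X"
  shows "fst (bishop (a + m) n (stack a A X) (i + a, j)) < a \<longleftrightarrow>
     \<not> (\<exists>k. i < k \<and> k < m \<and> (k, snd (s_R n X (i, j))) \<in> X)"
proof -
  define c' where "c' = snd (s_R n X (i, j))"
  have "c' < n" using sR_X_col[OF X ij] c'_def by simp
  then have exA: "\<exists>r. (r, c') \<in> A" using A unfolding is_array_def by blast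
  have "(LEAST r. (r, c') \<in> A) < a" using arr_sub[OF A LeastI_ex[OF exA]] by simp
  then show ?thesis using bishop_X_cell[OF A X ij] c'_def by auto
qed

lemma J_sR:
  assumes "1 \<le> m" "c' < n"
  shows "s_R n (J m n) (m - 1, (c' + n - 1) mod n) = (m - 1, c')"
proof -
  have n: "0 < n" using assms by simp
  have "(LEAST t. t \<ge> 1 \<and> (m - 1, ((c' + n - 1) mod n + t) mod n) \<in> J m n) = 1"
    by (rule Least_equality) (use assms n in \<open>auto simp: J_def\<close>)
  moreover have "((c' + n - 1) mod n + 1) mod n = c'"
  proof -
    have "Suc (c' + n - 1) = c' + n" using n by simp
    then show ?thesis using assms by (simp add: mod_Suc_eq)
  qed
  ultimately show ?thesis unfolding s_R_def Let_def by simp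
qed

lemma A_relation:
  assumes A: "is_array a n A" and X: "is_array m n X" and m: "1 \<le> m" and y: "fst y < a"
  shows "bishop (a + m) n (stack a A X) y =
    (\<lambda>p. if fst p < a then p else (a + (LEAST k. (k, snd p) \<in> X), snd p))
      (bishop (a + m) n (stack a A (J m n)) y)"
proof -
  obtain r c where yrc: "y = (r, c)" by fastforce
  have r: "r < a" using y yrc by simp
  have "0 < a" using r by simp
  then have n: "0 < n" using A unfolding is_array_def by fastforce
  define c2 where "c2 = snd (s_R n A (r, c))"
  have sr: "s_R n A (r, c) = (r, c2)" unfolding c2_def s_R_def Let_def by simp
  have c2: "c2 < n" unfolding c2_def s_R_def Let_def using n by simp
  have J: "is_array m n (J m n)" using J_array m n by simp
  have top: "(LEAST k. (k, c2) \<in> J m n) = 0" using m c2 by (simp add: J_def)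
  have b1: "bishop (a + m) n (stack a A X) y = s_C (a + m) (stack a A X) (r, c2)"
    unfolding bishop_def yrc using sR_stack_A[OF r] sr by simp
  have b2: "bishop (a + m) n (stack a A (J m n)) y = s_C (a + m) (stack a A (J m n)) (r, c2)"
    unfolding bishop_def yrc using sR_stack_A[OF r] sr by simp
  have k: "(LEAST k. r < k \<and> (k, c2) \<in> A) < a" if "\<exists>k. r < k \<and> k < a \<and> (k, c2) \<in> A"
  proof -
    have "\<exists>k. r < k \<and> (k, c2) \<in> A" using that by blast
    from arr_sub[OF A conjunct2[OF LeastI_ex[OF this]]] show ?thesis by simp
  qed
  show ?thesis unfolding b1 b2 sC_A[OF A X r c2] sC_A[OF A J r c2] top using k by auto
qed



lemma side:
  assumes A: "is_array a n A" and X: "is_array m n X" and ij: "(i, j) \<in> X"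
    and nE: "\<not> (\<exists>k. i < k \<and> k < m \<and> (k, snd (s_R n X (i, j))) \<in> X)"
  defines "x' \<equiv> (m - 1 + a, (snd (s_R n X (i, j)) + n - 1) mod n)"
  shows "bishop (a + m) n (stack a A X) (i + a, j) = bishop (a + m) n (stack a A (J m n)) x'
    \<and> fst (bishop (a + m) n (stack a A (J m n)) x') < a
    \<and> return_X (bishop (a + m) n (stack a A X)) a (i + a, j) =
       (a + (LEAST k. (k, snd (return_X (bishop (a + m) n (stack a A (J m n))) a x')) \<in> X),
        snd (return_X (bishop (a + m) n (stack a A (J m n))) a x'))"
proof -
  define c' where "c' = snd (s_R n X (i, j))"
  have c': "c' < n" using sR_X_col[OF X ij] c'_def by simp
  have m: "1 \<le> m" using arr_sub[OF X ij] by simp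
  have n: "1 \<le> n" using c' by simp
  have J: "is_array m n (J m n)" using J_array m n by simp
  have x'J: "(m - 1, (c' + n - 1) mod n) \<in> J m n" using m n by (simp add: J_def)
  have cJ: "snd (s_R n (J m n) (m - 1, (c' + n - 1) mod n)) = c'" using J_sR[OF m c'] by simp
  have noJ: "\<not> (\<exists>k. m - 1 < k \<and> k < m \<and> (k, c') \<in> J m n)" by auto
  have x'c: "x' = (m - 1 + a, (c' + n - 1) mod n)" unfolding x'_def c'_def ..
  have bJ: "bishop (a + m) n (stack a A (J m n)) x' = ((LEAST r. (r, c') \<in> A), c')"
    unfolding x'c using bishop_X_cell[OF A J x'J, unfolded cJ] by (simp only: if_not_P[OF noJ])
  have bX: "bishop (a + m) n (stack a A X) (i + a, j) = ((LEAST r. (r, c') \<in> A), c')"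
    using bishop_X_cell[OF A X ij] nE unfolding c'_def by simp
  have exA: "\<exists>r. (r, c') \<in> A" using A c' unfolding is_array_def by blast
  have ltJ: "fst (bishop (a + m) n (stack a A (J m n)) x') < a"
    using bJ arr_sub[OF A LeastI_ex[OF exA]] by simp
  have Asub: "A \<subseteq> {..<a} \<times> UNIV" using A unfolding is_array_def by blast
  have x'S: "x' \<in> stack a A (J m n)" unfolding x'c mem_stack[OF Asub]
    using x'J m by (intro disjI2) simp
  obtain k where k: "k \<ge> 1" "(bishop (a + m) n (stack a A (J m n)) ^^ k) x' = x'"
    using bishop_return[OF stack_array[OF A J] x'S] by blast
  have ex: "\<exists>T\<ge>1. a \<le> fst ((bishop (a + m) n (stack a A (J m n)) ^^ T) x')"
    using k unfolding x'_def by auto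
  define g where "g = (\<lambda>p::cell. if fst p < a then p else (a + (LEAST k. (k, snd p) \<in> X), snd p))"
  have cp: "return_X (bishop (a + m) n (stack a A X)) a (i + a, j)
      = g (return_X (bishop (a + m) n (stack a A (J m n))) a x')
    \<and> a \<le> fst (return_X (bishop (a + m) n (stack a A (J m n))) a x')"
  proof (rule coupling)
    show "bishop (a + m) n (stack a A X) (i + a, j) = bishop (a + m) n (stack a A (J m n)) x'"
      using bJ bX by simp
    show "fst (bishop (a + m) n (stack a A (J m n)) x') < a" by (rule ltJ)
    show "\<And>y. fst y < a \<Longrightarrow> bishop (a + m) n (stack a A X) y = g (bishop (a + m) n (stack a A (J m n)) y)"
      unfolding g_def using A_relation[OF A X m] by blast
    show "\<And>p. fst p < a \<Longrightarrow> g p = p" unfolding g_def by simp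
    show "\<And>p. a \<le> fst p \<Longrightarrow> a \<le> fst (g p)" unfolding g_def by simp
    show "\<exists>T\<ge>1. a \<le> fst ((bishop (a + m) n (stack a A (J m n)) ^^ T) x')" by (rule ex)
  qed
  show ?thesis using cp bJ bX ltJ unfolding g_def by auto
qed

theorem proposition4p2:
  fixes A B :: "cell set" and a b m n :: nat
  assumes "is_array a n A" and "is_array b n B"
    and "bishop_equiv a A b B m n (J m n)"
  shows "\<forall>X. is_array m n X \<longrightarrow> bishop_equiv a A b B m n X"
proof (intro allI impI)
  fix X assume X: "is_array m n X"
  show "bishop_equiv a A b B m n X"
    unfolding bishop_equiv_def move_equiv_def
  proof (intro allI impI)
    fix i j assume ij: "(i, j) \<in> X"
    define c' where "c' = snd (s_R n X (i, j))"
    define E where "E = (\<exists>k. i < k \<and> k < m \<and> (k, c') \<in> X)"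
    have ltA: "fst (bishop (a + m) n (stack a A X) (i + a, j)) < a \<longleftrightarrow> \<not> E"
      using bishop_X_lt[OF assms(1) X ij] unfolding E_def c'_def .
    have ltB: "fst (bishop (b + m) n (stack b B X) (i + b, j)) < b \<longleftrightarrow> \<not> E"
      using bishop_X_lt[OF assms(2) X ij] unfolding E_def c'_def .
    show "(fst (bishop (a + m) n (stack a A X) (i + a, j)) < a) =
          (fst (bishop (b + m) n (stack b B X) (i + b, j)) < b) \<and>
          (fst (bishop (a + m) n (stack a A X) (i + a, j)) < a \<and>
           fst (bishop (b + m) n (stack b B X) (i + b, j)) < b \<longrightarrow>
           (fst (return_X (bishop (a + m) n (stack a A X)) a (i + a, j)) - a,
            snd (return_X (bishop (a + m) n (stack a A X)) a (i + a, j))) =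
           (fst (return_X (bishop (b + m) n (stack b B X)) b (i + b, j)) - b,
            snd (return_X (bishop (b + m) n (stack b B X)) b (i + b, j))))"
    proof (intro conjI impI)
      show "(fst (bishop (a + m) n (stack a A X) (i + a, j)) < a) =
          (fst (bishop (b + m) n (stack b B X) (i + b, j)) < b)" using ltA ltB by simp
      assume "fst (bishop (a + m) n (stack a A X) (i + a, j)) < a \<and>
           fst (bishop (b + m) n (stack b B X) (i + b, j)) < b"
      then have nE: "\<not> E" using ltA by simp
      note sA = side[OF assms(1) X ij nE[unfolded E_def c'_def]]
      note sB = side[OF assms(2) X ij nE[unfolded E_def c'_def]]
      define jj where "jj = (snd (s_R n X (i, j)) + n - 1) mod n"
      have m: "1 \<le> m" using arr_sub[OF X ij] by simp
      have n: "1 \<le> n" using arr_sub[OF X ij] by simp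
      have jJ: "(m - 1, jj) \<in> J m n" using m n unfolding jj_def J_def by simp
      have hyp: "(fst (return_X (bishop (a + m) n (stack a A (J m n))) a (m - 1 + a, jj)) - a,
            snd (return_X (bishop (a + m) n (stack a A (J m n))) a (m - 1 + a, jj))) =
           (fst (return_X (bishop (b + m) n (stack b B (J m n))) b (m - 1 + b, jj)) - b,
            snd (return_X (bishop (b + m) n (stack b B (J m n))) b (m - 1 + b, jj)))"
        using assms(3) jJ sA sB unfolding bishop_equiv_def move_equiv_def jj_def by blast
      then show "(fst (return_X (bishop (a + m) n (stack a A X)) a (i + a, j)) - a,
            snd (return_X (bishop (a + m) n (stack a A X)) a (i + a, j))) =
           (fst (return_X (bishop (b + m) n (stack b B X)) b (i + b, j)) - b,
            snd (return_X (bishop (b + m) n (stack b B X)) b (i + b, j)))"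
        using sA sB unfolding jj_def by simp
    qed
  qed
qed

end
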